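(* Fix $k\ge3$, $c>0$ and $\zeta\in(0,1]$ with $\zeta(k-1)c^{k-1}<e$. Let $F=F^{(k)}_{c,\zeta}$. Then for all bounded measurable $f,g:[0,1]\to\mathbb R_{>0}$, $$\|\log F^2(f)-\log F^2(g)\|_\infty\le(1-\delta)\|\log f-\log g\|_\infty,\qquad\delta=1-\zeta c^{k-1}(k-1)e^{-1}.$$
   Context: $\alpha_k=\frac12\sum_{i=1}^k\min\left(\frac1{i-1},\frac1{k-i}\right)$ (with $1/0=+\infty$). For $\ell\in\{1,\dots,k\}$, $I_\ell=\{-\ell+1,\dots,k-\ell\}\setminus\{0\}$ and $w(t,\ell)=\min\{\frac t{\ell-1},\frac{1-t}{k-\ell}\}$ (quotients by $0$ are $+\infty$). The operator $F^{(k)}_{c,\zeta}$ on bounded measurable $f:[0,1]\to\mathbb R_{>0}$ is $F^{(k)}_{c,\zeta}f(t)=c\exp\left[-\frac{\zeta}{\alpha_k}\sum_{\ell=1}^k\int_0^{w(t,\ell)}\prod_{i\in I_\ell}f(t+is)\,ds\right]$. $F^2=F\circ F$; $\|\cdot\|_\infty$ is the supremum norm. *)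

theory Defs
  imports "HOL-Analysis.Analysis"
begin

text \<open>Quotients by 0 are +infinity; we realise min(1/0, x) = x explicitly.\<close>

definition alpha_k :: "nat \<Rightarrow> real" where
  "alpha_k k = (1/2) * (\<Sum>i=1..k.
     (if i = 1 \<and> k = i then 0
      else if i = 1 then 1 / real (k - i)
      else if k = i then 1 / real (i - 1)
      else min (1 / real (i - 1)) (1 / real (k - i))))"

definition wfun :: "nat \<Rightarrow> real \<Rightarrow> nat \<Rightarrow> real" where
  "wfun k t l =
     (if l = 1 then (1 - t) / real (k - l)
      else if l = k then t / real (l - 1)
      else min (t / real (l - 1)) ((1 - t) / real (k - l)))"

definition Iset :: "nat \<Rightarrow> nat \<Rightarrow> int set" where
  "Iset k l = {1 - int l .. int k - int l} - {0}"

definition Fop :: "nat \<Rightarrow> real \<Rightarrow> real \<Rightarrow> (real \<Rightarrow> real) \<Rightarrow> real \<Rightarrow> real" where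
  "Fop k c \<zeta> f t = c * exp (- (\<zeta> / alpha_k k) *
     (\<Sum>l=1..k. set_lebesgue_integral lborel {0 .. wfun k t l}
        (\<lambda>s. \<Prod>i\<in>Iset k l. f (t + real_of_int i * s))))"

definition supnorm01 :: "(real \<Rightarrow> real) \<Rightarrow> ereal" where
  "supnorm01 h = (SUP t\<in>{0..1}. ereal \<bar>h t\<bar>)"

definition admissible :: "(real \<Rightarrow> real) \<Rightarrow> bool" where
  "admissible f \<longleftrightarrow> (\<forall>t\<in>{0..1}. f t > 0) \<and> bounded (f ` {0..1})
     \<and> f \<in> borel_measurable (restrict_space lborel {0..1})"

end

theory Submission
  imports Defs
begin

lemma Iset_bounds:
  assumes "i \<in> Iset k l"
  shows "1 - int l \<le> i" "i \<le> int k - int l" "i \<noteq> 0"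
  using assms by (auto simp: Iset_def)

lemma geom:
  assumes t: "t \<in> {0..1}" and l: "l \<in> {1..k}" and i: "i \<in> Iset k l" and s: "s \<in> {0..wfun k t l}"
  shows "t + real_of_int i * s \<in> {0..1}"
proof -
  have i1: "1 - int l \<le> i" and i2: "i \<le> int k - int l" and i0: "i \<noteq> 0"
    using Iset_bounds[OF i] by auto
  have s0: "0 \<le> s" and sw: "s \<le> wfun k t l" using s by auto
  have t0: "0 \<le> t" "t \<le> 1" using t by auto
  show ?thesis
  proof (cases "i < 0")
    case True
    then have l2: "l \<ge> 2" using i1 by linarith
    have lpos: "real (l - 1) > 0" using l2 by simp
    have "wfun k t l \<le> t / real (l - 1)"
      using l2 by (auto simp: wfun_def)
    then have "wfun k t l * real (l - 1) \<le> t" using lpos by (simp add: pos_le_divide_eq)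
    moreover have "s * real (l - 1) \<le> wfun k t l * real (l - 1)" using sw by (rule mult_right_mono) simp
    ultimately have "s * real (l - 1) \<le> t" by linarith
    then have "- real (l - 1) * s \<ge> - t" by (simp add: mult.commute)
    moreover have "real_of_int i * s \<ge> - real (l - 1) * s"
      using i1 s0 l2 by (intro mult_right_mono) (auto simp: of_nat_diff)
    moreover have "real_of_int i * s \<le> 0" using True s0 by (simp add: mult_nonpos_nonneg)
    ultimately show ?thesis using t0 by simp
  next
    case False
    then have ip: "i > 0" using i0 by simp
    then have lk: "l < k" using i2 by linarith
    have kpos: "real (k - l) > 0" using lk by simp
    have "wfun k t l \<le> (1 - t) / real (k - l)"
      using lk by (auto simp: wfun_def)
    then have "wfun k t l * real (k - l) \<le> 1 - t" using kpos by (simp add: pos_le_divide_eq)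
    moreover have "s * real (k - l) \<le> wfun k t l * real (k - l)" using sw by (rule mult_right_mono) simp
    ultimately have "s * real (k - l) \<le> 1 - t" by linarith
    then have "real (k - l) * s \<le> 1 - t" by (simp add: mult.commute)
    moreover have "real_of_int i * s \<le> real (k - l) * s"
      using i2 s0 lk by (intro mult_right_mono) (auto simp: of_nat_diff)
    moreover have "real_of_int i * s \<ge> 0" using ip s0 by simp
    ultimately show ?thesis using t0 by simp
  qed
qed

lemma wnonneg:
  assumes "t \<in> {0..1}" shows "0 \<le> wfun k t l"
  using assms by (auto simp: wfun_def)

lemma card_Iset:
  assumes "l \<in> {1..k}"
  shows "finite (Iset k l)" "card (Iset k l) = k - 1"
proof -
  show "finite (Iset k l)" by (simp add: Iset_def)
  have "(0::int) \<in> {1 - int l .. int k - int l}" using assms by auto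
  then show "card (Iset k l) = k - 1" using assms
    by (simp add: Iset_def card_Diff_singleton) 
qed

lemma min_pair:
  fixes a b t :: real
  assumes "0 \<le> t" "t \<le> 1" "0 \<le> a" "0 \<le> b"
  shows "min (t*a) ((1-t)*b) + min (t*b) ((1-t)*a) \<le> min a b"
proof (cases "a \<le> b")
  case True
  have "min (t*a) ((1-t)*b) + min (t*b) ((1-t)*a) \<le> t*a + (1-t)*a" by linarith
  then show ?thesis using True by (simp add: algebra_simps)
next
  case False
  have "min (t*a) ((1-t)*b) + min (t*b) ((1-t)*a) \<le> (1-t)*b + t*b" by linarith
  then show ?thesis using False by (simp add: algebra_simps)
qed

definition aterm :: "nat \<Rightarrow> nat \<Rightarrow> real" where
  "aterm k i = (if i = 1 \<and> k = i then 0
      else if i = 1 then 1 / real (k - i)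
      else if k = i then 1 / real (i - 1)
      else min (1 / real (i - 1)) (1 / real (k - i)))"

lemma pair_bound:
  assumes k: "k \<ge> 3" and t: "t \<in> {0..1}" and l: "l \<in> {1..k}"
  shows "wfun k t l + wfun k t (k + 1 - l) \<le> aterm k l"
proof -
  have t0: "0 \<le> t" "t \<le> 1" using t by auto
  consider "l = 1" | "l = k" | "l \<noteq> 1" "l \<noteq> k" by blast
  then show ?thesis
  proof cases
    case 1
    then show ?thesis using k by (simp add: wfun_def aterm_def add_divide_distrib[symmetric])
  next
    case 2
    then show ?thesis using k by (simp add: wfun_def aterm_def add_divide_distrib[symmetric])
  next
    case 3
    have e1: "k + 1 - l \<noteq> 1" "k + 1 - l \<noteq> k" using 3 l by auto
    have e2: "real (k + 1 - l - 1) = real (k - l)" "real (k - (k + 1 - l)) = real (l - 1)"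
      using l by (auto simp: of_nat_diff)
    have "wfun k t l + wfun k t (k + 1 - l) =
       min (t * (1 / real (l - 1))) ((1 - t) * (1 / real (k - l))) +
       min (t * (1 / real (k - l))) ((1 - t) * (1 / real (l - 1)))"
      using 3 e1 e2 by (simp add: wfun_def)
    also have "\<dots> \<le> min (1 / real (l - 1)) (1 / real (k - l))"
      using t0 by (intro min_pair) auto
    finally show ?thesis using 3 by (simp add: aterm_def)
  qed
qed

lemma alpha_aterm: "alpha_k k = (1/2) * (\<Sum>l=1..k. aterm k l)"
  unfolding alpha_k_def aterm_def by simp

lemma sumw:
  assumes k: "k \<ge> 3" and t: "t \<in> {0..1}"
  shows "(\<Sum>l=1..k. wfun k t l) \<le> alpha_k k"
proof -
  have rev: "(\<Sum>l=1..k. wfun k t l) = (\<Sum>l=1..k. wfun k t (k + 1 - l))"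
    using sum.atLeastAtMost_rev[of "\<lambda>l. wfun k t l" 1 k] by simp
  have "2 * (\<Sum>l=1..k. wfun k t l) = (\<Sum>l=1..k. wfun k t l + wfun k t (k + 1 - l))"
    by (subst sum.distrib, subst rev[symmetric]) simp
  also have "\<dots> \<le> (\<Sum>l=1..k. aterm k l)"
    by (rule sum_mono) (rule pair_bound[OF k t], simp)
  finally show ?thesis unfolding alpha_aterm by simp
qed

lemma alpha_pos:
  assumes k: "k \<ge> 3" shows "alpha_k k > 0"
proof -
  have "(\<Sum>l\<in>{1,k}. wfun k 0 l) \<le> (\<Sum>l=1..k. wfun k 0 l)"
    using k by (intro sum_mono2) (auto intro: wnonneg)
  also have "\<dots> \<le> alpha_k k" using sumw[OF k] by simp
  finally have "(\<Sum>l\<in>{1,k}. wfun k 0 l) \<le> alpha_k k" .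
  moreover have "(\<Sum>l\<in>{1,k}. wfun k 0 l) = 1 / real (k - 1)" using k by (simp add: wfun_def)
  moreover have "1 / real (k - 1) > 0" using k by simp
  ultimately show ?thesis by (metis order.strict_trans2)
qed

lemma xexp_bound: "(x::real) * exp (- x) \<le> exp (-1)"
proof -
  have "x \<le> exp (x - 1)" using exp_ge_add_one_self[of "x - 1"] by simp
  then have "x * exp (-x) \<le> exp (x - 1) * exp (-x)" by (simp add: mult_right_mono)
  also have "\<dots> = exp (-1)" by (simp flip: exp_add)
  finally show ?thesis .
qed

lemma expb:
  fixes x y m :: real
  assumes "0 \<le> x" "0 \<le> y" "0 \<le> m" "x \<le> exp m * y" "y \<le> exp m * x"
  shows "\<bar>exp (- x) - exp (- y)\<bar> \<le> m * exp (-1)"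
proof (cases "x = 0 \<or> y = 0")
  case True
  then have "x = 0 \<and> y = 0" using assms by (auto simp: mult_le_0_iff)
  then show ?thesis using assms by simp
next
  case False
  then have xp: "x > 0" "y > 0" using assms by auto
  define \<phi> where "\<phi> = (\<lambda>z::real. exp (- exp z))"
  have der: "\<And>z. DERIV \<phi> z :> - (exp z * exp (- exp z))"
    unfolding \<phi>_def by (auto intro!: derivative_eq_intros)
  have lip: "\<bar>\<phi> u - \<phi> v\<bar> \<le> exp (-1) * \<bar>u - v\<bar>" for u v
  proof -
    have main: "\<bar>\<phi> b - \<phi> a\<bar> \<le> exp (-1) * (b - a)" if "a < b" for a b
    proof -
      have "\<exists>z>a. z < b \<and> \<phi> b - \<phi> a = (b - a) * (- (exp z * exp (- exp z)))"
        by (rule MVT2[OF that]) (rule der)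
      then obtain z where "a < z" "z < b" "\<phi> b - \<phi> a = (b - a) * (- (exp z * exp (- exp z)))"
        by blast
      then have "\<bar>\<phi> b - \<phi> a\<bar> = (b - a) * (exp z * exp (- exp z))" using that by (simp add: abs_mult)
      also have "\<dots> \<le> (b - a) * exp (-1)" using that xexp_bound[of "exp z"] by (intro mult_left_mono) auto
      finally show ?thesis by (simp add: mult.commute)
    qed
    show ?thesis
      using main[of u v] main[of v u] by (cases u v rule: linorder_cases) (auto simp: abs_minus_commute)
  qed
  have "ln x \<le> ln (exp m * y)" using assms xp by (subst ln_le_cancel_iff) auto
  then have 1: "ln x \<le> m + ln y" using xp by (simp add: ln_mult)
  have "ln y \<le> ln (exp m * x)" using assms xp by (subst ln_le_cancel_iff) auto
  then have 2: "ln y \<le> m + ln x" using xp by (simp add: ln_mult)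
  have "\<bar>ln x - ln y\<bar> \<le> m" using 1 2 by linarith
  then have 3: "exp (-1) * \<bar>ln x - ln y\<bar> \<le> exp (-1) * m" by (rule mult_left_mono) simp
  have "exp (- x) - exp (- y) = \<phi> (ln x) - \<phi> (ln y)" using xp by (simp add: \<phi>_def)
  then have "\<bar>exp (- x) - exp (- y)\<bar> \<le> exp (-1) * \<bar>ln x - ln y\<bar>" using lip[of "ln x" "ln y"] by simp
  then show ?thesis using 3 mult.commute[of m "exp (-1)"] by linarith
qed


lemma wfun_meas[measurable]: "(\<lambda>t. wfun k t l) \<in> borel_measurable borel"
  unfolding wfun_def by (cases "l = 1"; cases "l = k") simp_all

lemma meas_G:
  fixes h :: "real \<Rightarrow> real"
  assumes hm[measurable]: "h \<in> borel_measurable borel"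
  shows "(\<lambda>p. indicator {0..wfun k (fst p) l} (snd p) * (\<Prod>i\<in>Iset k l. h (fst p + real_of_int i * snd p)))
     \<in> borel_measurable (lborel \<Otimes>\<^sub>M lborel)"
proof -
  have eq: "(\<lambda>p::real\<times>real. indicator {0..wfun k (fst p) l} (snd p) :: real) = (\<lambda>p. if 0 \<le> snd p \<and> snd p \<le> wfun k (fst p) l then 1 else 0)"
    by (auto simp: indicator_def)
  have m1: "(\<lambda>p::real\<times>real. if 0 \<le> snd p \<and> snd p \<le> wfun k (fst p) l then 1 else 0 :: real) \<in> borel_measurable (lborel \<Otimes>\<^sub>M lborel)"
    by measurable
  have m2: "(\<lambda>p. (\<Prod>i\<in>Iset k l. h (fst p + real_of_int i * snd p))) \<in> borel_measurable (lborel \<Otimes>\<^sub>M lborel)"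
    by measurable
  have eq2: "(\<lambda>p::real\<times>real. indicator {0..wfun k (fst p) l} (snd p) * (\<Prod>i\<in>Iset k l. h (fst p + real_of_int i * snd p)))
    = (\<lambda>p. (if 0 \<le> snd p \<and> snd p \<le> wfun k (fst p) l then 1 else 0) * (\<Prod>i\<in>Iset k l. h (fst p + real_of_int i * snd p)))"
    by (rule ext) (simp add: indicator_def)
  show ?thesis unfolding eq2 by (rule borel_measurable_times[OF m1 m2])
qed

lemma integ:
  fixes h h' :: "real \<Rightarrow> real"
  assumes hm[measurable]: "h' \<in> borel_measurable borel" and heq: "\<And>x. x \<in> {0..1} \<Longrightarrow> h' x = h x"
    and hb: "\<And>x. x \<in> {0..1} \<Longrightarrow> \<bar>h x\<bar> \<le> M" and y: "y \<in> {0..1}" and l: "l \<in> {1..k}"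
  shows "set_integrable lborel {0..wfun k y l} (\<lambda>s. \<Prod>i\<in>Iset k l. h (y + real_of_int i * s))"
proof -
  let ?A = "{0..wfun k y l}"
  have M0: "0 \<le> M" using hb[of 0] by auto
  have c: "set_integrable lborel ?A (\<lambda>_. M ^ card (Iset k l))"
    by (rule borel_integrable_atLeastAtMost') (rule continuous_on_const)
  have eqf: "(\<lambda>s. indicator ?A s *\<^sub>R (\<Prod>i\<in>Iset k l. h (y + real_of_int i * s)))
     = (\<lambda>s. indicator ?A s * (\<Prod>i\<in>Iset k l. h' (y + real_of_int i * s)))"
  proof
    fix s show "indicator ?A s *\<^sub>R (\<Prod>i\<in>Iset k l. h (y + real_of_int i * s))
     = indicator ?A s * (\<Prod>i\<in>Iset k l. h' (y + real_of_int i * s))"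
    proof (cases "s \<in> ?A")
      case True
      have "(\<Prod>i\<in>Iset k l. h (y + real_of_int i * s)) = (\<Prod>i\<in>Iset k l. h' (y + real_of_int i * s))"
        by (rule prod.cong[OF refl]) (rule heq[OF geom[OF y l _ True], symmetric])
      then show ?thesis by simp
    qed simp
  qed
  have "(\<lambda>s. indicator ?A s * (\<Prod>i\<in>Iset k l. h' (y + real_of_int i * s))) \<in> borel_measurable lborel"
    by measurable
  then have m: "set_borel_measurable lborel ?A (\<lambda>s. \<Prod>i\<in>Iset k l. h (y + real_of_int i * s))"
    unfolding set_borel_measurable_def eqf .
  show ?thesis
  proof (rule set_integrable_bound[OF c m], rule AE_I2, rule impI)
    fix s assume s: "s \<in> ?A"
    have "\<bar>\<Prod>i\<in>Iset k l. h (y + real_of_int i * s)\<bar> = (\<Prod>i\<in>Iset k l. \<bar>h (y + real_of_int i * s)\<bar>)"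
      by (rule abs_prod)
    also have "\<dots> \<le> (\<Prod>i\<in>Iset k l. M)"
      by (rule prod_mono) (auto intro: hb geom[OF y l _ s])
    also have "\<dots> = M ^ card (Iset k l)" by simp
    finally show "norm (\<Prod>i\<in>Iset k l. h (y + real_of_int i * s)) \<le> norm (M ^ card (Iset k l))"
      using M0 by simp
  qed
qed

definition Sf :: "nat \<Rightarrow> (real \<Rightarrow> real) \<Rightarrow> real \<Rightarrow> real" where
  "Sf k h y = (\<Sum>l=1..k. set_lebesgue_integral lborel {0..wfun k y l} (\<lambda>s. \<Prod>i\<in>Iset k l. h (y + real_of_int i * s)))"

lemma Fop_Sf: "Fop k c \<zeta> h y = c * exp (- (\<zeta> / alpha_k k) * Sf k h y)"
  by (simp add: Fop_def Sf_def)

lemma int_nonneg: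
  fixes h :: "real \<Rightarrow> real"
  assumes "\<And>x. x \<in> {0..1} \<Longrightarrow> 0 \<le> h x" "y \<in> {0..1}" "l \<in> {1..k}"
  shows "0 \<le> set_lebesgue_integral lborel {0..wfun k y l} (\<lambda>s. \<Prod>i\<in>Iset k l. h (y + real_of_int i * s))"
  unfolding set_lebesgue_integral_def
  by (intro integral_nonneg_AE AE_I2) (auto simp: indicator_def intro!: prod_nonneg assms(1) geom[OF assms(2,3)])

lemma Sf_nonneg:
  assumes "\<And>x. x \<in> {0..1} \<Longrightarrow> 0 \<le> h x" "y \<in> {0..1}"
  shows "0 \<le> Sf k h y"
  unfolding Sf_def by (rule sum_nonneg) (rule int_nonneg[OF assms])

lemma Fop_meas:
  fixes h h' :: "real \<Rightarrow> real"
  assumes hm[measurable]: "h' \<in> borel_measurable borel" and heq: "\<And>x. x \<in> {0..1} \<Longrightarrow> h' x = h x"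
  shows "\<exists>H \<in> borel_measurable borel. \<forall>x\<in>{0..1}. H x = Fop k c \<zeta> h x"
proof -
  define G where "G l y s = indicator {0..wfun k y l} s * (\<Prod>i\<in>Iset k l. h' (y + real_of_int i * s))" for l y s
  have mi[measurable]: "(\<lambda>y. \<integral>s. G l y s \<partial>lborel) \<in> borel_measurable borel" for l
  proof -
    have "case_prod (G l) \<in> borel_measurable (lborel \<Otimes>\<^sub>M lborel)"
      using meas_G[OF hm, of k l] by (simp add: G_def case_prod_beta')
    then have "(\<lambda>y. \<integral>s. G l y s \<partial>lborel) \<in> borel_measurable lborel"
      by (rule lborel.borel_measurable_lebesgue_integral)
    then show ?thesis by simp
  qed
  define H where "H y = c * exp (- (\<zeta> / alpha_k k) * (\<Sum>l=1..k. \<integral>s. G l y s \<partial>lborel))" for y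
  have "H \<in> borel_measurable borel" unfolding H_def by measurable
  moreover have "\<forall>x\<in>{0..1}. H x = Fop k c \<zeta> h x"
  proof
    fix y :: real assume y: "y \<in> {0..1}"
    have gi: "(\<integral>s. G l y s \<partial>lborel) = set_lebesgue_integral lborel {0..wfun k y l} (\<lambda>s. \<Prod>i\<in>Iset k l. h (y + real_of_int i * s))"
      if l: "l \<in> {1..k}" for l
      unfolding set_lebesgue_integral_def G_def
    proof (rule Bochner_Integration.integral_cong[OF refl])
      fix s
      show "indicator {0..wfun k y l} s * (\<Prod>i\<in>Iset k l. h' (y + real_of_int i * s)) =
          indicator {0..wfun k y l} s *\<^sub>R (\<Prod>i\<in>Iset k l. h (y + real_of_int i * s))"
      proof (cases "s \<in> {0..wfun k y l}")
        case True
        have "(\<Prod>i\<in>Iset k l. h (y + real_of_int i * s)) = (\<Prod>i\<in>Iset k l. h' (y + real_of_int i * s))"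
          by (rule prod.cong[OF refl]) (rule heq[OF geom[OF y l _ True], symmetric])
        then show ?thesis by simp
      qed simp
    qed
    have "(\<Sum>l=1..k. \<integral>s. G l y s \<partial>lborel) = Sf k h y"
      unfolding Sf_def by (rule sum.cong[OF refl]) (rule gi)
    then show "H y = Fop k c \<zeta> h y"
      unfolding H_def Fop_Sf by simp
  qed
  ultimately show ?thesis by blast
qed


lemma adm_meas:
  fixes f :: "real \<Rightarrow> real"
  assumes "admissible f"
  shows "\<exists>f'\<in>borel_measurable borel. \<forall>x\<in>{0..1}. f' x = f x"
proof -
  have "f \<in> borel_measurable (restrict_space lborel {0..1})" using assms by (simp add: admissible_def)
  then have "(\<lambda>x. indicator {0..1} x *\<^sub>R f x) \<in> borel_measurable lborel"
    by (subst (asm) borel_measurable_restrict_space_iff) auto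
  then have m: "(\<lambda>x. indicator {0..1} x *\<^sub>R f x) \<in> borel_measurable borel" by simp
  show ?thesis
  proof (rule bexI[OF _ m])
    show "\<forall>x\<in>{0..1}. indicator {0..1} x *\<^sub>R f x = f x" by simp
  qed
qed

lemma adm_bound:
  fixes f :: "real \<Rightarrow> real"
  assumes "admissible f"
  shows "\<exists>M. \<forall>x\<in>{0..1}. \<bar>f x\<bar> \<le> M"
proof -
  have "bounded (f ` {0..1})" using assms by (simp add: admissible_def)
  then obtain a where "\<forall>y\<in>f ` {0..1}. norm y \<le> a" by (auto simp: bounded_iff)
  then show ?thesis by auto
qed

lemma adm_pos:
  assumes "admissible f" "x \<in> {0..1}" shows "0 < f x"
  using assms by (simp add: admissible_def)

lemma ratio:
  fixes f g :: "real \<Rightarrow> real"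
  assumes fa: "admissible f" and ga: "admissible g"
    and hd: "\<And>x. x \<in> {0..1} \<Longrightarrow> \<bar>ln (f x) - ln (g x)\<bar> \<le> d" and y: "y \<in> {0..1}"
  shows "Sf k f y \<le> exp (real (k - 1) * d) * Sf k g y"
proof -
  obtain f' where f'[measurable]: "f' \<in> borel_measurable borel" and f'e: "\<forall>x\<in>{0..1}. f' x = f x"
    using adm_meas[OF fa] by blast
  obtain g' where g'[measurable]: "g' \<in> borel_measurable borel" and g'e: "\<forall>x\<in>{0..1}. g' x = g x"
    using adm_meas[OF ga] by blast
  obtain Mf where Mf: "\<forall>x\<in>{0..1}. \<bar>f x\<bar> \<le> Mf" using adm_bound[OF fa] by blast
  obtain Mg where Mg: "\<forall>x\<in>{0..1}. \<bar>g x\<bar> \<le> Mg" using adm_bound[OF ga] by blast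
  have fg: "f x \<le> exp d * g x" if x: "x \<in> {0..1}" for x
  proof -
    have "f x = exp (ln (f x))" using adm_pos[OF fa x] by simp
    also have "\<dots> \<le> exp (d + ln (g x))" using hd[OF x] by simp
    also have "\<dots> = exp d * g x" using adm_pos[OF ga x] by (simp add: exp_add)
    finally show ?thesis .
  qed
  have "Sf k f y = (\<Sum>l=1..k. set_lebesgue_integral lborel {0..wfun k y l} (\<lambda>s. \<Prod>i\<in>Iset k l. f (y + real_of_int i * s)))"
    by (simp add: Sf_def)
  also have "\<dots> \<le> (\<Sum>l=1..k. exp (real (k - 1) * d) * set_lebesgue_integral lborel {0..wfun k y l} (\<lambda>s. \<Prod>i\<in>Iset k l. g (y + real_of_int i * s)))"
  proof (rule sum_mono)
    fix l assume l: "l \<in> {1..k}"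
    have intf: "set_integrable lborel {0..wfun k y l} (\<lambda>s. \<Prod>i\<in>Iset k l. f (y + real_of_int i * s))"
      by (rule integ[OF f'(1) _ _ y l]) (use f'e Mf in auto)
    have intg: "set_integrable lborel {0..wfun k y l} (\<lambda>s. \<Prod>i\<in>Iset k l. g (y + real_of_int i * s))"
      by (rule integ[OF g'(1) _ _ y l]) (use g'e Mg in auto)
    have "set_lebesgue_integral lborel {0..wfun k y l} (\<lambda>s. \<Prod>i\<in>Iset k l. f (y + real_of_int i * s))
       \<le> set_lebesgue_integral lborel {0..wfun k y l} (\<lambda>s. exp (real (k - 1) * d) * (\<Prod>i\<in>Iset k l. g (y + real_of_int i * s)))"
    proof (rule set_integral_mono[OF intf])
      show "set_integrable lborel {0..wfun k y l} (\<lambda>s. exp (real (k - 1) * d) * (\<Prod>i\<in>Iset k l. g (y + real_of_int i * s)))"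
        using intg by (rule set_integrable_mult_right)
    next
      fix s assume s: "s \<in> {0..wfun k y l}"
      have "(\<Prod>i\<in>Iset k l. f (y + real_of_int i * s)) \<le> (\<Prod>i\<in>Iset k l. exp d * g (y + real_of_int i * s))"
        by (rule prod_mono) (auto intro: fg geom[OF y l _ s] less_imp_le[OF adm_pos[OF fa]])
      also have "\<dots> = exp d ^ card (Iset k l) * (\<Prod>i\<in>Iset k l. g (y + real_of_int i * s))"
        by (simp add: prod.distrib)
      also have "exp d ^ card (Iset k l) = exp (real (k - 1) * d)"
        using card_Iset[OF l] by (simp add: exp_of_nat_mult)
      finally show "(\<Prod>i\<in>Iset k l. f (y + real_of_int i * s)) \<le> exp (real (k - 1) * d) * (\<Prod>i\<in>Iset k l. g (y + real_of_int i * s))" .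
    qed
    then show "set_lebesgue_integral lborel {0..wfun k y l} (\<lambda>s. \<Prod>i\<in>Iset k l. f (y + real_of_int i * s))
       \<le> exp (real (k - 1) * d) * set_lebesgue_integral lborel {0..wfun k y l} (\<lambda>s. \<Prod>i\<in>Iset k l. g (y + real_of_int i * s))"
      by simp
  qed
  also have "\<dots> = exp (real (k - 1) * d) * Sf k g y"
    by (simp add: Sf_def sum_distrib_left)
  finally show ?thesis .
qed


lemma int_diff_bound:
  fixes P Q :: "real \<Rightarrow> real"
  assumes iP: "set_integrable lborel {0..w} P" and iQ: "set_integrable lborel {0..w} Q" and w: "0 \<le> w"
    and b: "\<And>s. s \<in> {0..w} \<Longrightarrow> \<bar>P s - Q s\<bar> \<le> C"
  shows "\<bar>set_lebesgue_integral lborel {0..w} P - set_lebesgue_integral lborel {0..w} Q\<bar> \<le> w * C"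
proof -
  have ci: "set_integrable lborel {0..w} (\<lambda>_. C)"
    by (rule borel_integrable_atLeastAtMost') (rule continuous_on_const)
  have ci2: "set_integrable lborel {0..w} (\<lambda>_. - C)"
    by (rule borel_integrable_atLeastAtMost') (rule continuous_on_const)
  have di: "set_integrable lborel {0..w} (\<lambda>s. P s - Q s)" by (rule set_integral_diff(1)[OF iP iQ])
  have eq: "(LINT s:{0..w}|lborel. P s - Q s) = set_lebesgue_integral lborel {0..w} P - set_lebesgue_integral lborel {0..w} Q"
    by (rule set_integral_diff(2)[OF iP iQ])
  have c1: "(LINT s:{0..w}|lborel. C) = w * C" using w by (simp add: set_integral_const)
  have c2: "(LINT s:{0..w}|lborel. - C) = - (w * C)" using w by (simp add: set_integral_const)
  have "(LINT s:{0..w}|lborel. P s - Q s) \<le> (LINT s:{0..w}|lborel. C)"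
    by (rule set_integral_mono[OF di ci]) (use b in \<open>auto simp: abs_le_iff\<close>)
  moreover have "(LINT s:{0..w}|lborel. - C) \<le> (LINT s:{0..w}|lborel. P s - Q s)"
    by (rule set_integral_mono[OF ci2 di]) (use b in \<open>force simp: abs_le_iff\<close>)
  ultimately show ?thesis using eq c1 c2 by (simp add: abs_le_iff)
qed

lemma prod_form:
  fixes b :: "int \<Rightarrow> real"
  assumes "finite I"
  shows "(\<Prod>i\<in>I. c * exp (- b i)) = c ^ card I * exp (- (\<Sum>i\<in>I. b i))"
proof -
  have "exp (- (\<Sum>i\<in>I. b i)) = (\<Prod>i\<in>I. exp (- b i))"
    using assms by (simp add: exp_sum[symmetric] sum_negf)
  then show ?thesis by (simp add: prod.distrib)
qed

lemma absmul: "0 \<le> (a::real) \<Longrightarrow> \<bar>S\<bar> \<le> B \<Longrightarrow> \<bar>a * S\<bar> \<le> a * B"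
  by (simp add: abs_mult mult_left_mono)

lemma core:
  fixes f g :: "real \<Rightarrow> real"
  assumes k: "k \<ge> 3" and c: "c > 0" and z: "\<zeta> > 0" and fa: "admissible f" and ga: "admissible g"
    and hd: "\<And>x. x \<in> {0..1} \<Longrightarrow> \<bar>ln (f x) - ln (g x)\<bar> \<le> d" and t: "t \<in> {0..1}"
  shows "\<bar>ln (Fop k c \<zeta> (Fop k c \<zeta> f) t) - ln (Fop k c \<zeta> (Fop k c \<zeta> g) t)\<bar>
     \<le> \<zeta> * c ^ (k - 1) * real (k - 1) * exp (-1) * d"
proof -
  define \<alpha> where "\<alpha> = alpha_k k"
  have ap: "\<alpha> > 0" using alpha_pos[OF k] by (simp add: \<alpha>_def)
  have d0: "0 \<le> d" using hd[OF t] by linarith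
  define m where "m = real (k - 1) * d"
  have m0: "0 \<le> m" using d0 by (simp add: m_def)
  define B where "B h y = \<zeta> / \<alpha> * Sf k h y" for h y
  have FB: "Fop k c \<zeta> h y = c * exp (- B h y)" for h y by (simp add: Fop_Sf B_def \<alpha>_def)
  have za: "0 \<le> \<zeta> / \<alpha>" using z ap by simp
  have B0: "0 \<le> B h y" if "admissible h" "y \<in> {0..1}" for h y
  proof -
    have "0 \<le> Sf k h y" by (rule Sf_nonneg) (use adm_pos[OF that(1)] that(2) in \<open>auto intro: less_imp_le\<close>)
    then show ?thesis unfolding B_def by (rule mult_nonneg_nonneg[OF za])
  qed
  have hd': "\<And>x. x \<in> {0..1} \<Longrightarrow> \<bar>ln (g x) - ln (f x)\<bar> \<le> d" using hd by (simp add: abs_minus_commute)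
  have Bfg: "B f y \<le> exp m * B g y" if "y \<in> {0..1}" for y
  proof -
    have "B f y \<le> \<zeta> / \<alpha> * (exp m * Sf k g y)"
      unfolding B_def m_def by (rule mult_left_mono[OF ratio[OF fa ga hd that] za])
    then show ?thesis by (simp add: B_def mult.left_commute)
  qed
  have Bgf: "B g y \<le> exp m * B f y" if "y \<in> {0..1}" for y
  proof -
    have "B g y \<le> \<zeta> / \<alpha> * (exp m * Sf k f y)"
      unfolding B_def m_def by (rule mult_left_mono[OF ratio[OF ga fa hd' that] za])
    then show ?thesis by (simp add: B_def mult.left_commute)
  qed
  have Fbnd: "\<bar>Fop k c \<zeta> h y\<bar> \<le> c" if "admissible h" "y \<in> {0..1}" for h y
  proof -
    have "exp (- B h y) \<le> 1" using B0[OF that] by simp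
    then show ?thesis unfolding FB using c by (simp add: abs_mult mult_left_le)
  qed
  obtain f' where f'[measurable]: "f' \<in> borel_measurable borel" and f'e: "\<forall>x\<in>{0..1}. f' x = f x"
    using adm_meas[OF fa] by blast
  obtain g' where g'[measurable]: "g' \<in> borel_measurable borel" and g'e: "\<forall>x\<in>{0..1}. g' x = g x"
    using adm_meas[OF ga] by blast
  obtain Hf where Hf: "Hf \<in> borel_measurable borel" "\<forall>x\<in>{0..1}. Hf x = Fop k c \<zeta> f x"
    using Fop_meas[OF f'(1), of f k c \<zeta>] f'e by blast
  obtain Hg where Hg: "Hg \<in> borel_measurable borel" "\<forall>x\<in>{0..1}. Hg x = Fop k c \<zeta> g x"
    using Fop_meas[OF g'(1), of g k c \<zeta>] g'e by blast
  define C where "C = c ^ (k - 1) * (m * exp (-1))"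
  have lbound: "\<bar>set_lebesgue_integral lborel {0..wfun k t l} (\<lambda>s. \<Prod>i\<in>Iset k l. Fop k c \<zeta> g (t + real_of_int i * s))
      - set_lebesgue_integral lborel {0..wfun k t l} (\<lambda>s. \<Prod>i\<in>Iset k l. Fop k c \<zeta> f (t + real_of_int i * s))\<bar>
      \<le> wfun k t l * C" if l: "l \<in> {1..k}" for l
  proof (rule int_diff_bound)
    show "set_integrable lborel {0..wfun k t l} (\<lambda>s. \<Prod>i\<in>Iset k l. Fop k c \<zeta> f (t + real_of_int i * s))"
      by (rule integ[OF Hf(1) _ _ t l]) (use Hf(2) Fbnd[OF fa] in auto)
    show "set_integrable lborel {0..wfun k t l} (\<lambda>s. \<Prod>i\<in>Iset k l. Fop k c \<zeta> g (t + real_of_int i * s))"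
      by (rule integ[OF Hg(1) _ _ t l]) (use Hg(2) Fbnd[OF ga] in auto)
    show "0 \<le> wfun k t l" by (rule wnonneg[OF t])
  next
    fix s assume s: "s \<in> {0..wfun k t l}"
    have fin: "finite (Iset k l)" and cd: "card (Iset k l) = k - 1" using card_Iset[OF l] by auto
    define X where "X h = (\<Sum>i\<in>Iset k l. B h (t + real_of_int i * s))" for h
    have PX: "(\<Prod>i\<in>Iset k l. Fop k c \<zeta> h (t + real_of_int i * s)) = c ^ (k - 1) * exp (- X h)" for h
      unfolding FB X_def using prod_form[OF fin, of c "\<lambda>i. B h (t + real_of_int i * s)"] cd by simp
    have zi: "\<And>i. i \<in> Iset k l \<Longrightarrow> t + real_of_int i * s \<in> {0..1}" using geom[OF t l _ s] by blast
    have X0: "0 \<le> X h" if "admissible h" for h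
      unfolding X_def by (rule sum_nonneg) (rule B0[OF that zi])
    have Xfg: "X f \<le> exp m * X g"
      unfolding X_def sum_distrib_left by (rule sum_mono) (rule Bfg[OF zi])
    have Xgf: "X g \<le> exp m * X f"
      unfolding X_def sum_distrib_left by (rule sum_mono) (rule Bgf[OF zi])
    have e: "\<bar>exp (- X g) - exp (- X f)\<bar> \<le> m * exp (-1)"
      by (rule expb[OF X0[OF ga] X0[OF fa] m0 Xgf Xfg])
    have "\<bar>c ^ (k - 1) * exp (- X g) - c ^ (k - 1) * exp (- X f)\<bar> = c ^ (k - 1) * \<bar>exp (- X g) - exp (- X f)\<bar>"
      using c by (simp add: abs_mult flip: right_diff_distrib)
    also have "\<dots> \<le> C" unfolding C_def using e c by (intro mult_left_mono) auto
    finally show "\<bar>(\<Prod>i\<in>Iset k l. Fop k c \<zeta> g (t + real_of_int i * s)) - (\<Prod>i\<in>Iset k l. Fop k c \<zeta> f (t + real_of_int i * s))\<bar> \<le> C"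
      unfolding PX .
  qed
  have C0: "0 \<le> C" unfolding C_def using c m0 by simp
  have lnF: "ln (Fop k c \<zeta> h t) = ln c - \<zeta> / \<alpha> * Sf k h t" for h
    unfolding FB B_def using c by (simp add: ln_mult)
  have "ln (Fop k c \<zeta> (Fop k c \<zeta> f) t) - ln (Fop k c \<zeta> (Fop k c \<zeta> g) t)
     = \<zeta> / \<alpha> * (Sf k (Fop k c \<zeta> g) t - Sf k (Fop k c \<zeta> f) t)"
    unfolding lnF by (simp add: algebra_simps)
  also have "Sf k (Fop k c \<zeta> g) t - Sf k (Fop k c \<zeta> f) t =
     (\<Sum>l=1..k. set_lebesgue_integral lborel {0..wfun k t l} (\<lambda>s. \<Prod>i\<in>Iset k l. Fop k c \<zeta> g (t + real_of_int i * s))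
      - set_lebesgue_integral lborel {0..wfun k t l} (\<lambda>s. \<Prod>i\<in>Iset k l. Fop k c \<zeta> f (t + real_of_int i * s)))"
    unfolding Sf_def by (simp add: sum_subtractf)
  finally have eqd: "ln (Fop k c \<zeta> (Fop k c \<zeta> f) t) - ln (Fop k c \<zeta> (Fop k c \<zeta> g) t) = \<zeta> / \<alpha> * (\<Sum>l=1..k. set_lebesgue_integral lborel {0..wfun k t l} (\<lambda>s. \<Prod>i\<in>Iset k l. Fop k c \<zeta> g (t + real_of_int i * s))
      - set_lebesgue_integral lborel {0..wfun k t l} (\<lambda>s. \<Prod>i\<in>Iset k l. Fop k c \<zeta> f (t + real_of_int i * s)))" .
  have "\<bar>\<Sum>l=1..k. set_lebesgue_integral lborel {0..wfun k t l} (\<lambda>s. \<Prod>i\<in>Iset k l. Fop k c \<zeta> g (t + real_of_int i * s))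
      - set_lebesgue_integral lborel {0..wfun k t l} (\<lambda>s. \<Prod>i\<in>Iset k l. Fop k c \<zeta> f (t + real_of_int i * s))\<bar>
     \<le> (\<Sum>l=1..k. \<bar>set_lebesgue_integral lborel {0..wfun k t l} (\<lambda>s. \<Prod>i\<in>Iset k l. Fop k c \<zeta> g (t + real_of_int i * s))
      - set_lebesgue_integral lborel {0..wfun k t l} (\<lambda>s. \<Prod>i\<in>Iset k l. Fop k c \<zeta> f (t + real_of_int i * s))\<bar>)"
    by (rule sum_abs)
  also have "\<dots> \<le> (\<Sum>l=1..k. wfun k t l * C)"
    by (rule sum_mono) (rule lbound)
  also have "\<dots> = (\<Sum>l=1..k. wfun k t l) * C" by (simp add: sum_distrib_right)
  also have "\<dots> \<le> \<alpha> * C" unfolding \<alpha>_def by (rule mult_right_mono[OF sumw[OF k t] C0])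
  finally have sb: "\<bar>\<Sum>l=1..k. set_lebesgue_integral lborel {0..wfun k t l} (\<lambda>s. \<Prod>i\<in>Iset k l. Fop k c \<zeta> g (t + real_of_int i * s))
      - set_lebesgue_integral lborel {0..wfun k t l} (\<lambda>s. \<Prod>i\<in>Iset k l. Fop k c \<zeta> f (t + real_of_int i * s))\<bar> \<le> \<alpha> * C" .
  have "\<bar>ln (Fop k c \<zeta> (Fop k c \<zeta> f) t) - ln (Fop k c \<zeta> (Fop k c \<zeta> g) t)\<bar> \<le> \<zeta> / \<alpha> * (\<alpha> * C)"
    unfolding eqd by (rule absmul[OF za sb])
  also have "\<dots> = \<zeta> * C" using ap by simp
  also have "\<dots> = \<zeta> * c ^ (k - 1) * real (k - 1) * exp (-1) * d" by (simp add: C_def m_def)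
  finally show ?thesis .
qed


theorem mainTheorem20:
  fixes k :: nat and c \<zeta> :: real and f g :: "real \<Rightarrow> real"
  assumes "k \<ge> 3" and "c > 0" and "0 < \<zeta>" and "\<zeta> \<le> 1"
    and "\<zeta> * real (k - 1) * c ^ (k - 1) < exp 1"
    and "admissible f" and "admissible g"
  shows "supnorm01 (\<lambda>t. ln (Fop k c \<zeta> (Fop k c \<zeta> f) t) - ln (Fop k c \<zeta> (Fop k c \<zeta> g) t))
    \<le> ereal (1 - (1 - \<zeta> * c ^ (k - 1) * real (k - 1) * exp (-1)))
       * supnorm01 (\<lambda>t. ln (f t) - ln (g t))"
proof -
  define q where "q = \<zeta> * c ^ (k - 1) * real (k - 1) * exp (-1)"
  have q0: "q > 0" unfolding q_def using assms(1,2,3) by simp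
  have rhs: "1 - (1 - \<zeta> * c ^ (k - 1) * real (k - 1) * exp (-1)) = q" by (simp add: q_def)
  define D where "D = supnorm01 (\<lambda>t. ln (f t) - ln (g t))"
  have up: "ereal \<bar>ln (f x) - ln (g x)\<bar> \<le> D" if "x \<in> {0..1}" for x
    unfolding D_def supnorm01_def by (rule SUP_upper[OF that])
  have "ereal 0 \<le> ereal \<bar>ln (f 0) - ln (g 0)\<bar>" by simp
  then have "ereal 0 \<le> D" using up[of 0] by (rule order_trans) simp
  then have D0: "0 \<le> D" by (simp add: zero_ereal_def)
  have rhs2: "ereal (1 - (1 - \<zeta> * c ^ (k - 1) * real (k - 1) * exp (-1))) * supnorm01 (\<lambda>t. ln (f t) - ln (g t))
     = ereal q * D" by (simp add: q_def D_def)
  have "supnorm01 (\<lambda>t. ln (Fop k c \<zeta> (Fop k c \<zeta> f) t) - ln (Fop k c \<zeta> (Fop k c \<zeta> g) t)) \<le> ereal q * D"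
  proof (cases D rule: ereal_cases)
    case (real d)
    have hd: "\<bar>ln (f x) - ln (g x)\<bar> \<le> d" if "x \<in> {0..1}" for x
      using up[OF that] real by simp
    have "supnorm01 (\<lambda>t. ln (Fop k c \<zeta> (Fop k c \<zeta> f) t) - ln (Fop k c \<zeta> (Fop k c \<zeta> g) t)) \<le> ereal (q * d)"
      unfolding supnorm01_def
    proof (rule SUP_least)
      fix t :: real assume t: "t \<in> {0..1}"
      have "\<bar>ln (Fop k c \<zeta> (Fop k c \<zeta> f) t) - ln (Fop k c \<zeta> (Fop k c \<zeta> g) t)\<bar> \<le> q * d"
        unfolding q_def by (rule core[OF assms(1,2,3,6,7) hd t])
      then show "ereal \<bar>ln (Fop k c \<zeta> (Fop k c \<zeta> f) t) - ln (Fop k c \<zeta> (Fop k c \<zeta> g) t)\<bar> \<le> ereal (q * d)"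
        by simp
    qed
    then show ?thesis using real by simp
  next
    case PInf
    then show ?thesis using q0 by simp
  next
    case MInf
    then show ?thesis using D0 by simp
  qed
  then show ?thesis unfolding rhs2 .
qed

end
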